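(* Let $j\ge3$ and $n\ge j-2$ be integers. (i) If $n\ge 2j-2$, then there exists $\tilde\lambda\in(1/n,n)$ with the following properties: - $\lambda_{n,j}(\lambda)>1/n$ for all $\lambda\in(1/n,\tilde\lambda)$; - $\lambda_{n,j}(\lambda)=1/n$ for $\lambda\in\{1/n,\tilde\lambda\}$; - $\lambda_{n,j}(\lambda)<1/n$ for all $\lambda\in(\tilde\lambda,\infty]$. (ii) If $n\le 2j-3$, then $\lambda_{n,j}(\lambda)<1/n$ for all $\lambda\in(1/n,\infty]$.
   Context: For an integer $n\ge1$ let $f_n(x)=(1+x)^{n+1}/x$ for $x>0$. The function $f_n$ is strictly decreasing on $(0,1/n]$ and strictly increasing on $[1/n,\infty)$. Regular graph exponents (Schmidt–Summerer), defined algebraically. For $\lambda\in[1/n,\infty)$ let $\mu\in(0,1/n]$ be the unique solution of $f_n(\mu)=f_n(\lambda)$, and set $$\lambda_{n,j}(\lambda)=\lambda^{1-\frac{j-1}{n+1}}\mu^{\frac{j-1}{n+1}},\qquad 1\le j\le n+2 .$$ All ratios $\lambda_{n,j}/\lambda_{n,j+1}$ are equal. For $\lambda=\infty$ put $\lambda_{n,1}=\infty$, $\lambda_{n,2}=1$ and $\lambda_{n,j}=0$ for $3\le j\le n+2$. These are the exponents $\lambda_{n,j}$ of the regular graph in dimension $n$ with parameter $\lambda_n=\lambda$. They depend continuously on $\lambda$. *)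

theory Defs
  imports "HOL-Analysis.Analysis"
begin

definition fn :: "nat \<Rightarrow> real \<Rightarrow> real" where
  "fn n x = (1 + x) ^ (n + 1) / x"

definition mu_reg :: "nat \<Rightarrow> real \<Rightarrow> real" where
  "mu_reg n lam = (THE m. 0 < m \<and> m \<le> 1 / real n \<and> fn n m = fn n lam)"

definition lam_reg :: "nat \<Rightarrow> nat \<Rightarrow> real \<Rightarrow> real" where
  "lam_reg n j lam =
     lam powr (1 - (real j - 1) / (real n + 1)) * mu_reg n lam powr ((real j - 1) / (real n + 1))"

definition lam_reg_ext :: "nat \<Rightarrow> nat \<Rightarrow> ereal \<Rightarrow> ereal" where
  "lam_reg_ext n j L = (case L of
       ereal x \<Rightarrow> ereal (lam_reg n j x)
     | PInfty \<Rightarrow> (if j = 1 then \<infinity> else if j = 2 then 1 else 0)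
     | MInfty \<Rightarrow> undefined)"

end

theory Submission
  imports Defs
begin


lemma fn_deriv:
  assumes "x > 0"
  shows "(fn n has_real_derivative ((1+x)^n*(real n*x - 1)/x^2)) (at x)"
proof -
  have "(fn n has_real_derivative ((real (n+1) * (1+x)^n * x - (1+x)^(n+1)) / x^2)) (at x)"
    unfolding fn_def[abs_def] using assms
    by (auto intro!: derivative_eq_intros simp: power2_eq_square; cases n; auto simp: algebra_simps)
  moreover have "(real (n+1) * (1+x)^n * x - (1+x)^(n+1)) = (1+x)^n*(real n*x - 1)"
    by (simp add: algebra_simps)
  ultimately show ?thesis by simp
qed

lemma fn_cont: "a > 0 \<Longrightarrow> continuous_on {a..b} (fn n)"
  unfolding fn_def[abs_def] by (intro continuous_intros) auto

lemma fn_dec: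
  assumes "n \<ge> 1" "0 < a" "a < b" "b \<le> 1 / real n"
  shows "fn n b < fn n a"
proof -
  have "fn n a > fn n b"
  proof (rule DERIV_neg_imp_decreasing_open[OF assms(3)])
    fix x assume x: "a < x" "x < b"
    have "real n * x < real n * (1/real n)" using x assms by (intro mult_strict_left_mono) auto
    then have "real n * x - 1 < 0" using assms by simp
    then show "\<exists>y. DERIV (fn n) x :> y \<and> y < 0"
      using fn_deriv[of x n] x assms by (intro exI[of _ "(1+x)^n*(real n*x - 1)/x^2"])
        (auto simp: mult_pos_neg divide_neg_pos)
  qed (use fn_cont assms in auto)
  then show ?thesis by simp
qed

lemma fn_inc:
  assumes "n \<ge> 1" "1 / real n \<le> a" "a < b"
  shows "fn n a < fn n b"
proof (rule DERIV_pos_imp_increasing_open[OF assms(3)])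
  have "1 / real n > 0" using assms(1) by simp
  then have a0: "a > 0" using assms(2) by linarith
  fix x assume x: "a < x" "x < b"
  have "real n * (1/real n) < real n * x" using x assms by (intro mult_strict_left_mono) auto
  then have "real n * x - 1 > 0" using assms by simp
  then show "\<exists>y. DERIV (fn n) x :> y \<and> y > 0"
    using fn_deriv[of x n] x a0 by (intro exI[of _ "(1+x)^n*(real n*x - 1)/x^2"]) auto
next
  have "1 / real n > 0" using assms(1) by simp
  then have a0: "a > 0" using assms(2) by linarith
  then show "continuous_on {a..b} (fn n)" using fn_cont by auto
qed

lemma geo1: "((t::real) - 1) * (\<Sum>m<k. t^m) = t^k - 1"
  by (induction k) (auto simp: algebra_simps)

lemma geo2: "((t::real) - 1) * (\<Sum>m\<in>{1..k}. t^m) = t^(k+1) - t"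
  by (induction k) (auto simp: algebra_simps)

lemma geo3: assumes "(t::real) \<noteq> 0" shows "(t - 1) * (\<Sum>m\<in>{1..k}. (1/t)^m) = 1 - (1/t)^k"
proof (induction k)
  case (Suc k)
  have "(t - 1) * (\<Sum>m\<in>{1..Suc k}. (1/t)^m) = (t - 1) * (\<Sum>m\<in>{1..k}. (1/t)^m) + (t-1)*(1/t)^Suc k"
    by (simp add: algebra_simps)
  also have "\<dots> = 1 - (1/t)^k + (t-1)*(1/t)^Suc k" using Suc by simp
  also have "(t-1)*(1/t)^Suc k = (1/t)^k - (1/t)^Suc k" using assms
    by (simp add: power_Suc field_simps)
  finally show ?case by simp
qed simp

lemma gauss_real: "2 * (\<Sum>i\<in>{1..n}. real i) = real n * (real n + 1)"
  by (induction n) (auto simp: algebra_simps)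



lemma fn_ge: "x > 0 \<Longrightarrow> fn n x \<ge> 1 / x"
proof -
  assume x: "x > 0"
  have "1 \<le> (1+x)^(n+1)" using one_le_power[of "1+x" "n+1"] x by simp
  then show ?thesis unfolding fn_def using x by (intro divide_right_mono) auto
qed

lemma mu_exists:
  assumes n: "n \<ge> 1" and l: "lam \<ge> 1 / real n"
  shows "\<exists>m. 0 < m \<and> m \<le> 1 / real n \<and> fn n m = fn n lam"
proof (cases "lam = 1 / real n")
  case True then show ?thesis using n by (intro exI[of _ "1/real n"]) auto
next
  case False
  then have l': "lam > 1 / real n" using l by simp
  have f1: "fn n (1/real n) < fn n lam" using fn_inc[OF n _ l'] by simp
  have "fn n (1/real n) \<ge> real n" using fn_ge[of "1/real n" n] n by simp
  then have fl: "fn n lam > real n" using f1 by simp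
  define e where "e = 1 / (fn n lam + 1)"
  have e0: "e > 0" using fl e_def by (simp add: add_pos_nonneg)
  have "fn n lam + 1 > real n" using fl by simp
  then have e1: "e < 1 / real n" unfolding e_def using n by (intro divide_strict_left_mono) auto
  have "fn n e \<ge> 1 / e" using fn_ge e0 by simp
  also have "1/e = fn n lam + 1" using e_def e0 by simp
  finally have fe: "fn n e \<ge> fn n lam" by simp
  have "\<exists>m. e \<le> m \<and> m \<le> 1 / real n \<and> fn n m = fn n lam"
    by (rule IVT2') (use fe f1 e1 fn_cont[OF e0] in auto)
  then obtain m where m: "e \<le> m" "m \<le> 1 / real n" "fn n m = fn n lam" by blast
  have "0 < m" using m(1) e0 by linarith
  then show ?thesis using m(2,3) by blast
qed

lemma mu_unique:
  assumes "n \<ge> 1" "0 < a" "a \<le> 1/real n" "0 < b" "b \<le> 1/real n" "fn n a = fn n b"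
  shows "a = b"
proof (rule ccontr)
  assume "a \<noteq> b"
  then consider "a < b" | "b < a" by linarith
  then show False
  proof cases
    case 1 then show False using fn_dec[OF assms(1) assms(2) 1 assms(5)] assms(6) by simp
  next
    case 2 then show False using fn_dec[OF assms(1) assms(4) 2 assms(3)] assms(6) by simp
  qed
qed

lemma mu_props:
  assumes n: "n \<ge> 1" and l: "lam \<ge> 1 / real n"
  shows "0 < mu_reg n lam \<and> mu_reg n lam \<le> 1 / real n \<and> fn n (mu_reg n lam) = fn n lam"
proof -
  obtain m where m: "0 < m \<and> m \<le> 1 / real n \<and> fn n m = fn n lam" using mu_exists[OF n l] by blast
  have ex1: "\<exists>!m. 0 < m \<and> m \<le> 1 / real n \<and> fn n m = fn n lam"
  proof (rule ex1I[of _ m])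
    fix y assume "0 < y \<and> y \<le> 1 / real n \<and> fn n y = fn n lam"
    then show "y = m" using mu_unique[OF n, of y m] m by simp
  qed (rule m)
  show ?thesis unfolding mu_reg_def by (rule theI'[OF ex1])
qed

lemma mu_lt:
  assumes n: "n \<ge> 1" and l: "lam > 1 / real n"
  shows "mu_reg n lam < 1 / real n"
proof -
  have "fn n (1/real n) < fn n lam" using fn_inc[OF n _ l] by simp
  moreover have "mu_reg n lam \<le> 1 / real n" "fn n (mu_reg n lam) = fn n lam"
    using mu_props[OF n, of lam] l by auto
  ultimately show ?thesis by (cases "mu_reg n lam = 1 / real n") auto
qed

lemma mu_at:
  assumes n: "n \<ge> 1"
  shows "mu_reg n (1/real n) = 1 / real n"
proof -
  have "0 < mu_reg n (1/real n)" "mu_reg n (1/real n) \<le> 1 / real n" "fn n (mu_reg n (1/real n)) = fn n (1/real n)"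
    using mu_props[OF n, of "1/real n"] by auto
  moreover have "0 < 1 / real n" using n by simp
  ultimately show ?thesis using mu_unique[OF n, of "mu_reg n (1/real n)" "1/real n"] by simp
qed



definition Gs :: "nat \<Rightarrow> real \<Rightarrow> real" where "Gs n t = (\<Sum>k\<in>{1..n}. (1/t)^k)"
definition Aterm :: "nat \<Rightarrow> nat \<Rightarrow> real \<Rightarrow> real" where
  "Aterm p i t = (if p \<le> i then (\<Sum>m<i-p. t^m) else -(\<Sum>m\<in>{1..p-i}. (1/t)^m))"
definition Af :: "nat \<Rightarrow> nat \<Rightarrow> real \<Rightarrow> real" where "Af n p t = (\<Sum>i\<in>{1..n}. Aterm p i t)"

lemma pw1: "(t::real) \<noteq> 0 \<Longrightarrow> t^k * (1/t)^k = 1"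
  by (simp add: power_mult_distrib[symmetric])

lemma A1: assumes "t > 0" shows "(t-1)*t^p*Aterm p i t = t^i - t^p"
proof (cases "p \<le> i")
  case True
  have "(t-1)*t^p*Aterm p i t = t^p * ((t-1)*(\<Sum>m<i-p. t^m))" using True by (simp add: Aterm_def algebra_simps)
  also have "\<dots> = t^p * (t^(i-p) - 1)" by (simp add: geo1)
  also have "\<dots> = t^(p + (i-p)) - t^p" by (simp add: power_add algebra_simps)
  finally show ?thesis using True by simp
next
  case False
  have "(t-1)*t^p*Aterm p i t = (- (t^p)) * ((t-1)*(\<Sum>m\<in>{1..p-i}. (1/t)^m))" using False by (simp add: Aterm_def algebra_simps)
  also have "\<dots> = (- (t^p)) * (1 - (1/t)^(p-i))" using geo3[of t "p-i"] assms by simp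
  also have "\<dots> = t^i * (t^(p-i) * (1/t)^(p-i)) - t^i * t^(p-i)"
    using False by (simp add: power_add[symmetric] algebra_simps)
  also have "t^(p-i) * (1/t)^(p-i) = 1" using pw1[of t "p-i"] assms by simp
  also have "t^i * t^(p-i) = t^p" using False by (simp add: power_add[symmetric])
  finally show ?thesis by simp
qed

lemma A2: assumes "t > 0" shows "(t-1)*t^p*Af n p t = (\<Sum>i\<in>{1..n}. t^i) - real n*t^p"
proof -
  have "(t-1)*t^p*Af n p t = (\<Sum>i\<in>{1..n}. (t-1)*t^p*Aterm p i t)" by (simp add: Af_def sum_distrib_left)
  also have "\<dots> = (\<Sum>i\<in>{1..n}. t^i - t^p)" using A1[OF assms] by simp
  also have "\<dots> = (\<Sum>i\<in>{1..n}. t^i) - real n*t^p" by (simp add: sum_subtractf)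
  finally show ?thesis .
qed

lemma A3: assumes "0 < s" "s \<le> t" shows "Aterm p i s \<le> Aterm p i t"
proof (cases "p \<le> i")
  case True then show ?thesis using assms by (auto simp: Aterm_def intro!: sum_mono power_mono)
next
  case False
  have "1/t \<le> 1/s" using assms by (simp add: frac_le)
  then have "(\<Sum>m\<in>{1..p-i}. (1/t)^m) \<le> (\<Sum>m\<in>{1..p-i}. (1/s)^m)"
    using assms by (intro sum_mono power_mono) auto
  then show ?thesis using False by (simp add: Aterm_def)
qed

lemma A3s: assumes "0 < s" "s < t" "i < p" shows "Aterm p i s < Aterm p i t"
proof -
  have "1/t < 1/s" using assms by (simp add: frac_less2)
  then have "(\<Sum>m\<in>{1..p-i}. (1/t)^m) < (\<Sum>m\<in>{1..p-i}. (1/s)^m)"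
    using assms by (intro sum_strict_mono power_strict_mono) auto
  then show ?thesis using assms by (simp add: Aterm_def)
qed

lemma A4: "0 < s \<Longrightarrow> s \<le> t \<Longrightarrow> Af n p s \<le> Af n p t"
  unfolding Af_def by (intro sum_mono A3) auto

lemma A4s: assumes "0 < s" "s < t" "p \<ge> 2" "n \<ge> 1" shows "Af n p s < Af n p t"
  unfolding Af_def
proof (rule sum_strict_mono_ex1)
  show "\<forall>x\<in>{1..n}. Aterm p x s \<le> Aterm p x t" using A3 assms by auto
  show "\<exists>a\<in>{1..n}. Aterm p a s < Aterm p a t" using A3s[of s t 1 p] assms by (intro bexI[of _ 1]) auto
qed simp

lemma A5: "2 * Af n p 1 = real n * (real n + 1) - 2 * real n * real p"
proof -
  have "Af n p 1 = (\<Sum>i\<in>{1..n}. real i - real p)" unfolding Af_def Aterm_def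
    by (intro sum.cong) auto
  also have "\<dots> = (\<Sum>i\<in>{1..n}. real i) - real n * real p" by (simp add: sum_subtractf)
  finally show ?thesis using gauss_real[of n] by (simp add: algebra_simps)
qed

lemma A6: "S \<subseteq> {0<..} \<Longrightarrow> continuous_on S (Af n p)"
  unfolding Af_def[abs_def]
  apply (rule continuous_on_sum)
  subgoal for i unfolding Aterm_def by (cases "p \<le> i") (auto intro!: continuous_intros)
  done

lemma A7a: assumes "t \<ge> 1" shows "Aterm p i t \<ge> - (real p / t)"
proof (cases "p \<le> i")
  case True
  have "0 \<le> (\<Sum>m<i-p. t^m)" using assms by (intro sum_nonneg) auto
  moreover have "real p / t \<ge> 0" using assms by simp
  moreover have "Aterm p i t = (\<Sum>m<i-p. t^m)" using True by (simp add: Aterm_def)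
  ultimately show ?thesis by linarith
next
  case False
  have "\<forall>m\<in>{1..p-i}. (1/t)^m \<le> 1/t" using assms by (auto intro!: power_le_one_iff[THEN iffD2] simp: power_decreasing[of 1, simplified])
  then have "(\<Sum>m\<in>{1..p-i}. (1/t)^m) \<le> real (card {1..p-i}) * (1/t)" by (intro sum_bounded_above) auto
  also have "\<dots> \<le> real p * (1/t)" using assms by (intro mult_right_mono) auto
  finally show ?thesis using False by (simp add: Aterm_def)
qed

lemma A7: assumes "t \<ge> 1" "p < n" shows "Af n p t \<ge> 1 - real n * real p / t"
proof -
  have "Aterm p n t \<ge> 1"
  proof -
    have "(\<Sum>m<n-p. t^m) \<ge> t^0" using assms by (intro member_le_sum) auto
    then show ?thesis using assms by (simp add: Aterm_def)
  qed
  have "Af n p t = Aterm p n t + (\<Sum>i\<in>{1..n}-{n}. Aterm p i t)" unfolding Af_def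
    using assms by (subst sum.remove[of _ n]) auto
  moreover have "(\<Sum>i\<in>{1..n}-{n}. Aterm p i t) \<ge> real (card ({1..n}-{n})) * (- (real p / t))"
    by (rule sum_bounded_below) (use A7a assms in auto)
  moreover have "real (card ({1..n}-{n})) * (- (real p / t)) \<ge> real n * (- (real p / t))"
    using assms by (intro mult_right_mono_neg) auto
  ultimately show ?thesis using \<open>Aterm p n t \<ge> 1\<close> by simp
qed

lemma G1: assumes "t > 0" shows "t^(n+1) * Gs n t = (\<Sum>i\<in>{1..n}. t^i)"
proof (cases "t = 1")
  case True then show ?thesis by (simp add: Gs_def)
next
  case False
  have "(t-1) * (t^(n+1) * Gs n t) = t^(n+1) * ((t-1) * Gs n t)" by (simp add: algebra_simps)
  also have "\<dots> = t^(n+1) * (1 - (1/t)^n)" using geo3[of t n] assms by (simp add: Gs_def)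
  also have "\<dots> = t^(n+1) - t * (t^n * (1/t)^n)" by (simp add: algebra_simps)
  also have "\<dots> = t^(n+1) - t" using pw1[of t n] assms by simp
  also have "\<dots> = (t-1) * (\<Sum>i\<in>{1..n}. t^i)" using assms geo2[of t n] by simp
  finally show ?thesis using False by simp
qed

lemma G2: assumes "0 < s" "s < t" "n \<ge> 1" shows "Gs n t < Gs n s"
proof -
  have "1/t < 1/s" using assms by (simp add: frac_less2)
  then show ?thesis unfolding Gs_def using assms by (intro sum_strict_mono power_strict_mono) auto
qed

lemma G2w: assumes "0 < s" "s \<le> t" "n \<ge> 1" shows "Gs n t \<le> Gs n s"
  using G2[OF assms(1) _ assms(3), of t] assms by (cases "s = t") auto

lemma G3: assumes "t > 1" "n \<ge> 1" shows "Gs n t < real n"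
proof -
  have "Gs n t < (\<Sum>k\<in>{1..n}. 1)" unfolding Gs_def using assms
    by (intro sum_strict_mono) (auto simp: power_less_one_iff)
  then show ?thesis by simp
qed

lemma G0: "t > 0 \<Longrightarrow> n \<ge> 1 \<Longrightarrow> Gs n t > 0"
  unfolding Gs_def by (intro sum_pos) auto

lemma Key: assumes "t > 0" "n + 1 = p + (j - 1)"
  shows "t^(j-1) * Gs n t - real n = (t-1) * Af n p t"
proof -
  have "t^p * (t^(j-1) * Gs n t - real n) = t^(n+1) * Gs n t - real n * t^p"
    using assms(2) by (simp add: power_add[symmetric] algebra_simps)
  also have "\<dots> = t^p * ((t-1) * Af n p t)" using G1[OF assms(1), of n] A2[OF assms(1), of p n]
    by (simp add: algebra_simps)
  finally show ?thesis using assms(1) by simp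
qed



lemma lam_at:
  assumes "n \<ge> 1" shows "lam_reg n j (1/real n) = 1/real n"
proof -
  have "lam_reg n j (1/real n) = (1/real n) powr ((1 - (real j - 1) / (real n + 1)) + (real j - 1) / (real n + 1))"
    unfolding lam_reg_def mu_at[OF assms] using assms by (simp add: powr_add[symmetric])
  also have "\<dots> = 1/real n" using assms by simp
  finally show ?thesis .
qed

lemma bridge:
  assumes n: "n \<ge> 1" and j: "j \<ge> 1" "j \<le> n + 2" and l: "lam > 1 / real n"
  shows "\<exists>t>1. lam * Gs n t = 1 \<and>
     (1/real n - lam_reg n j lam) * (Gs n t * real n * t^(j-1)) = (t-1) * Af n (n+2-j) t"
proof -
  define mu where "mu = mu_reg n lam"
  have mp: "0 < mu" "mu < 1/real n" "fn n mu = fn n lam"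
    using mu_props[OF n, of lam] mu_lt[OF n l] l unfolding mu_def by auto
  have "1 / real n > 0" using n by simp
  then have lp: "lam > 0" using l by linarith
  define t where "t = (1+lam)/(1+mu)"
  have t1: "t > 1" unfolding t_def using mp l by simp
  have "t^(n+1) * mu = (1+lam)^(n+1) / ((1+mu)^(n+1)/mu)" unfolding t_def using mp by (simp add: power_divide)
  also have "(1+mu)^(n+1)/mu = (1+lam)^(n+1)/lam" using mp(3) by (simp add: fn_def)
  also have "(1+lam)^(n+1) / ((1+lam)^(n+1)/lam) = lam"
  proof -
    have "\<And>q::real. q \<noteq> 0 \<Longrightarrow> q / (q/lam) = lam" using lp by simp
    moreover have "(1+lam)^(n+1) \<noteq> 0" using lp by simp
    ultimately show ?thesis by blast
  qed
  finally have lt: "lam = t^(n+1) * mu" by simp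
  have tm: "1 + lam = t * (1 + mu)" unfolding t_def using mp by simp
  define a where "a = (real j - 1) / (real n + 1)"
  have "real n + 1 > 0" by simp
  then have a: "real (n+1) * a = real (j-1)" unfolding a_def using j
    by (simp add: of_nat_diff add.commute[of 1])
  have "mu = lam * (1/t)^(n+1)" using lt t1 by (simp add: field_simps)
  then have "mu powr a = lam powr a * ((1/t)^(n+1)) powr a"
    using powr_mult[of lam "(1/t)^(n+1)" a] lp t1 by simp
  also have "((1/t)^(n+1)) powr a = (1/t) powr (real (n+1) * a)"
  proof -
    have "(1/t)^(n+1) = (1/t) powr (real (n+1))" by (rule powr_realpow[symmetric]) (use t1 in simp)
    then show ?thesis by (simp only: powr_powr)
  qed
  also have "\<dots> = (1/t)^(j-1)" unfolding a using t1 by (simp add: powr_realpow)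
  finally have mua: "mu powr a = lam powr a * (1/t)^(j-1)" .
  have lr: "lam_reg n j lam = lam * (1/t)^(j-1)"
  proof -
    have "lam_reg n j lam = lam powr (1 - a) * mu powr a" unfolding lam_reg_def a_def mu_def by simp
    also have "\<dots> = (lam powr (1-a) * lam powr a) * (1/t)^(j-1)" unfolding mua by simp
    also have "lam powr (1-a) * lam powr a = lam powr ((1-a) + a)" by (simp only: powr_add)
    finally show ?thesis using lp by simp
  qed
  have lg: "lam * Gs n t = 1"
  proof -
    have "(t-1) * (lam * Gs n t) = lam * ((t-1) * Gs n t)" by (simp add: algebra_simps)
    also have "\<dots> = lam * (1 - (1/t)^n)" using geo3[of t n] t1 by (simp add: Gs_def)
    also have "\<dots> = lam - t * mu * (t^n * (1/t)^n)" using lt by (simp add: algebra_simps)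
    also have "\<dots> = t - 1" using pw1[of t n] t1 tm by (simp add: algebra_simps)
    finally show ?thesis using t1 by simp
  qed
  have g0: "Gs n t > 0" using G0 t1 n by simp
  have key: "t^(j-1) * Gs n t - real n = (t-1) * Af n (n+2-j) t" by (rule Key) (use t1 j in auto)
  have "(1/real n - lam_reg n j lam) * (Gs n t * real n * t^(j-1))
       = t^(j-1) * Gs n t - (lam * Gs n t) * real n * (t^(j-1) * (1/t)^(j-1))"
    unfolding lr using n by (simp add: field_simps)
  also have "t^(j-1) * (1/t)^(j-1) = 1" using pw1 t1 by simp
  finally have "(1/real n - lam_reg n j lam) * (Gs n t * real n * t^(j-1)) = (t-1) * Af n (n+2-j) t"
    using lg key by simp
  then show ?thesis using t1 lg by blast
qed

lemma bridge_sign: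
  assumes n: "n \<ge> 1" and j: "j \<ge> 1" "j \<le> n + 2" and l: "lam > 1 / real n"
  shows "\<exists>t>1. lam * Gs n t = 1 \<and>
     (lam_reg n j lam < 1/real n \<longleftrightarrow> Af n (n+2-j) t > 0) \<and>
     (lam_reg n j lam = 1/real n \<longleftrightarrow> Af n (n+2-j) t = 0) \<and>
     (lam_reg n j lam > 1/real n \<longleftrightarrow> Af n (n+2-j) t < 0)"
proof -
  obtain t where t: "t > 1" "lam * Gs n t = 1"
    and e: "(1/real n - lam_reg n j lam) * (Gs n t * real n * t^(j-1)) = (t-1) * Af n (n+2-j) t"
    using bridge[OF assms] by blast
  have D: "Gs n t * real n * t^(j-1) > 0" using G0[of t n] t n by simp
  define X where "X = 1/real n - lam_reg n j lam"
  define A where "A = Af n (n+2-j) t"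
  have e': "X * (Gs n t * real n * t^(j-1)) = (t-1) * A" using e X_def A_def by simp
  define Dv where "Dv = Gs n t * real n * t^(j-1)"
  have e'': "X * Dv = (t-1) * A" using e' unfolding Dv_def .
  have "Dv \<noteq> 0" using D unfolding Dv_def by linarith
  then have Xe: "X = ((t-1) * A) / Dv" using e'' by (metis nonzero_mult_div_cancel_right)
  have D': "Dv > 0" "t - 1 > 0" using D t unfolding Dv_def by auto
  have "X > 0 \<longleftrightarrow> A > 0" unfolding Xe using D' by (simp add: zero_less_divide_iff zero_less_mult_iff)
  moreover have "X = 0 \<longleftrightarrow> A = 0" unfolding Xe using D' by simp
  moreover have "X < 0 \<longleftrightarrow> A < 0" unfolding Xe using D' by (simp add: divide_less_0_iff mult_less_0_iff)
  ultimately show ?thesis using t unfolding X_def A_def by (intro exI[of _ t]) auto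
qed



lemma ext_fin: "lam_reg_ext n j (ereal x) = ereal (lam_reg n j x)"
  by (simp add: lam_reg_ext_def)

lemma ext_inf: "j \<ge> 3 \<Longrightarrow> lam_reg_ext n j \<infinity> = 0"
  by (simp add: lam_reg_ext_def)

lemma Gs_gt: assumes "t > 0" "n \<ge> 2" shows "Gs n t > 1/t"
proof -
  have "(\<Sum>k\<in>{1,2}. (1/t)^k) \<le> Gs n t" unfolding Gs_def
    by (rule sum_mono2) (use assms in auto)
  moreover have "(\<Sum>k\<in>{1,2}. (1/t)^k) = 1/t + (1/t)^2" by simp
  moreover have "(1/t)^2 > 0" using assms by simp
  ultimately show ?thesis by linarith
qed

theorem theorem2p5:
  fixes n j :: nat
  assumes "j \<ge> 3" and "n + 2 \<ge> j"
  shows "(n \<ge> 2 * j - 2 \<longrightarrow>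
            (\<exists>lt::real. 1 / real n < lt \<and> lt < real n
               \<and> (\<forall>x::real. 1 / real n < x \<and> x < lt \<longrightarrow> lam_reg_ext n j (ereal x) > ereal (1 / real n))
               \<and> lam_reg_ext n j (ereal (1 / real n)) = ereal (1 / real n)
               \<and> lam_reg_ext n j (ereal lt) = ereal (1 / real n)
               \<and> (\<forall>L::ereal. ereal lt < L \<longrightarrow> lam_reg_ext n j L < ereal (1 / real n))))
       \<and> (n \<le> 2 * j - 3 \<longrightarrow>
            (\<forall>L::ereal. ereal (1 / real n) < L \<longrightarrow> lam_reg_ext n j L < ereal (1 / real n)))"
proof -
  have n1: "n \<ge> 1" and j1: "j \<ge> 1" "j \<le> n + 2" using assms by auto
  define p where "p = n + 2 - j"
  have rp: "real p = real n + 2 - real j" unfolding p_def using assms by (simp add: of_nat_diff)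
  have A1: "2 * Af n p 1 = real n * (2 * real j - 3 - real n)" using A5[of n p] rp by (simp add: algebra_simps)
  have np: "1 / real n > 0" using n1 by simp
  have infcase: "lam_reg_ext n j \<infinity> < ereal (1 / real n)" using ext_inf[OF assms(1)] np by simp
  have BS: "\<And>x. x > 1 / real n \<Longrightarrow> \<exists>t>1. x * Gs n t = 1 \<and>
     (lam_reg n j x < 1/real n \<longleftrightarrow> Af n p t > 0) \<and>
     (lam_reg n j x = 1/real n \<longleftrightarrow> Af n p t = 0) \<and>
     (lam_reg n j x > 1/real n \<longleftrightarrow> Af n p t < 0)"
    unfolding p_def by (rule bridge_sign[OF n1 j1])
  have part2: "n \<le> 2 * j - 3 \<longrightarrow>
            (\<forall>L::ereal. ereal (1 / real n) < L \<longrightarrow> lam_reg_ext n j L < ereal (1 / real n))"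
  proof (intro impI allI)
    fix L :: ereal assume h: "n \<le> 2 * j - 3" and L: "ereal (1 / real n) < L"
    have hr: "real n \<le> 2 * real j - 3" using h assms by linarith
    have pos: "\<And>t. t > 1 \<Longrightarrow> Af n p t > 0"
    proof -
      fix t :: real assume t: "t > 1"
      show "Af n p t > 0"
      proof (cases "p \<ge> 2")
        case True
        have "real n * (2 * real j - 3 - real n) \<ge> 0" using hr by (intro mult_nonneg_nonneg) auto
        then have "Af n p 1 \<ge> 0" using A1 by linarith
        then show ?thesis using A4s[of 1 t p n] True t n1 by simp
      next
        case False
        then have "j \<ge> n + 1" unfolding p_def by simp
        then have "2 * real j - 3 - real n > 0" using assms by linarith
        then have "real n * (2 * real j - 3 - real n) > 0" using n1 by (intro mult_pos_pos) auto
        then have "Af n p 1 > 0" using A1 by linarith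
        then show ?thesis using A4[of 1 t n p] t by simp
      qed
    qed
    show "lam_reg_ext n j L < ereal (1 / real n)"
    proof (cases L)
      case (real x)
      then have x: "x > 1 / real n" using L by simp
      obtain t where "t > 1" "lam_reg n j x < 1/real n \<longleftrightarrow> Af n p t > 0" using BS[OF x] by blast
      then show ?thesis using pos real by (simp add: ext_fin)
    qed (use L infcase in auto)
  qed
  have part1: "n \<ge> 2 * j - 2 \<longrightarrow>
            (\<exists>lt::real. 1 / real n < lt \<and> lt < real n
               \<and> (\<forall>x::real. 1 / real n < x \<and> x < lt \<longrightarrow> lam_reg_ext n j (ereal x) > ereal (1 / real n))
               \<and> lam_reg_ext n j (ereal (1 / real n)) = ereal (1 / real n)
               \<and> lam_reg_ext n j (ereal lt) = ereal (1 / real n)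
               \<and> (\<forall>L::ereal. ereal lt < L \<longrightarrow> lam_reg_ext n j L < ereal (1 / real n)))"
  proof
    assume h: "n \<ge> 2 * j - 2"
    have hr: "real n \<ge> 2 * real j - 2" using h assms by linarith
    have p2: "p \<ge> 2" "p < n" unfolding p_def using h assms by auto
    have n2: "n \<ge> 2" using h assms by auto
    have "real n * (2 * real j - 3 - real n) < 0" using hr n1 by (intro mult_pos_neg) auto
    then have Aneg: "Af n p 1 < 0" using A1 by linarith
    define T0 where "T0 = real n * real p + 2"
    have T0: "T0 \<ge> 1" unfolding T0_def by simp
    have "Af n p T0 \<ge> 1 - real n * real p / T0" by (rule A7[OF T0 p2(2)])
    moreover have "real n * real p / T0 < 1"
    proof -
      have "real n * real p \<ge> 0" by simp
      then have "T0 > 0" "real n * real p < T0" unfolding T0_def by linarith+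
      then show ?thesis by (simp add: divide_less_eq)
    qed
    ultimately have Apos: "Af n p T0 > 0" by linarith
    have "{1..T0} \<subseteq> {0<..}" by auto
    then have cont: "continuous_on {1..T0} (Af n p)" by (rule A6)
    have "\<exists>x. 1 \<le> x \<and> x \<le> T0 \<and> Af n p x = 0"
      by (rule IVT') (use Aneg Apos T0 cont in auto)
    then obtain tt where tt: "1 \<le> tt" "Af n p tt = 0" by blast
    have tt1: "tt > 1" using tt Aneg by (cases "tt = 1") auto
    have mono_s: "\<And>s t. 0 < s \<Longrightarrow> s < t \<Longrightarrow> Af n p s < Af n p t" using A4s p2 n1 by blast
    have tt0: "tt > 0" using tt1 by simp
    have neg_lt: "\<And>t. t > 0 \<Longrightarrow> Af n p t < 0 \<Longrightarrow> t < tt"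
    proof (rule ccontr)
      fix t assume t: "t > 0" "Af n p t < 0" "\<not> t < tt"
      then consider "t = tt" | "tt < t" by linarith
      then show False using t tt mono_s[OF tt0, of t] by cases auto
    qed
    have pos_gt: "\<And>t. t > 0 \<Longrightarrow> Af n p t > 0 \<Longrightarrow> t > tt"
    proof (rule ccontr)
      fix t assume t: "t > 0" "Af n p t > 0" "\<not> t > tt"
      then consider "t = tt" | "t < tt" by linarith
      then show False using t tt mono_s[OF t(1), of tt] by cases auto
    qed
    have lt_neg: "\<And>t. 1 < t \<Longrightarrow> t < tt \<Longrightarrow> Af n p t < 0"
      using mono_s tt by (metis less_trans zero_less_one)
    have gt_pos: "\<And>t. tt < t \<Longrightarrow> Af n p t > 0"
      using mono_s[OF tt0] tt by simp
    have g0: "Gs n tt > 0" using G0[of tt n] tt1 n1 by simp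
    have gn: "Gs n tt < real n" using G3[OF tt1 n1] .
    define lt where "lt = 1 / Gs n tt"
    have lt1: "lt > 1 / real n" unfolding lt_def using g0 gn by (simp add: frac_less2)
    have ltg: "lt * Gs n tt = 1" unfolding lt_def using g0 by simp
    have Gs_lt: "\<And>s t. 0 < s \<Longrightarrow> 0 < t \<Longrightarrow> Gs n t < Gs n s \<Longrightarrow> s < t"
    proof (rule ccontr)
      fix s t :: real assume st: "0 < s" "0 < t" "Gs n t < Gs n s" "\<not> s < t"
      then have "Gs n s \<le> Gs n t" using G2w[of t s n] n1 by simp
      then show False using st by simp
    qed
    have Gs_eq: "\<And>s t. 0 < s \<Longrightarrow> 0 < t \<Longrightarrow> Gs n t = Gs n s \<Longrightarrow> s = t"
    proof (rule ccontr)
      fix s t :: real assume st: "0 < s" "0 < t" "Gs n t = Gs n s" "s \<noteq> t"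
      then consider "s < t" | "t < s" by linarith
      then show False using st G2[of s t n] G2[of t s n] n1 by cases auto
    qed
    have ltn: "lt < real n"
    proof -
      have "1 / real n \<le> 1" "real n \<ge> 2" using n1 n2 by auto
      then have xn: "real n > 1 / real n" by linarith
      obtain t where t: "t > 1" "real n * Gs n t = 1" using BS[OF xn] by blast
      have gt: "Gs n t = 1 / real n" using t n1 by (simp add: field_simps)
      have "Gs n t > 1 / t" using Gs_gt[of t n] t n2 by simp
      then have "1 / t < 1 / real n" using gt by simp
      then have tn: "t > real n" using t n1 by (simp add: field_simps)
      have "t^(j-1) \<ge> t^2" using t assms by (intro power_increasing) auto
      moreover have "t^2 > (real n)^2" using tn n1 by (intro power_strict_mono) auto
      ultimately have "t^(j-1) * Gs n t - real n > 0" unfolding gt using n1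
        by (simp add: power2_eq_square field_simps)
      moreover have "t^(j-1) * Gs n t - real n = (t-1) * Af n p t"
        by (rule Key) (use t assms in \<open>auto simp: p_def\<close>)
      ultimately have "(t-1) * Af n p t > 0" by linarith
      then have "Af n p t > 0" using t by (simp add: zero_less_mult_iff)
      then have "t > tt" using pos_gt t by simp
      then have "Gs n t < Gs n tt" using G2 tt1 n1 by simp
      then show ?thesis unfolding gt lt_def using g0 n1 by (simp add: field_simps)
    qed
    show "\<exists>lt::real. 1 / real n < lt \<and> lt < real n
               \<and> (\<forall>x::real. 1 / real n < x \<and> x < lt \<longrightarrow> lam_reg_ext n j (ereal x) > ereal (1 / real n))
               \<and> lam_reg_ext n j (ereal (1 / real n)) = ereal (1 / real n)
               \<and> lam_reg_ext n j (ereal lt) = ereal (1 / real n)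
               \<and> (\<forall>L::ereal. ereal lt < L \<longrightarrow> lam_reg_ext n j L < ereal (1 / real n))"
    proof (intro exI[of _ lt] conjI allI impI)
      show "1 / real n < lt" by (rule lt1)
      show "lt < real n" by (rule ltn)
      show "lam_reg_ext n j (ereal (1 / real n)) = ereal (1 / real n)" using lam_at[OF n1] by (simp add: ext_fin)
    next
      fix x assume x: "1 / real n < x \<and> x < lt"
      obtain t where t: "t > 1" "x * Gs n t = 1" "lam_reg n j x > 1/real n \<longleftrightarrow> Af n p t < 0"
        using BS[of x] x by blast
      have x0: "x > 0" using x np by linarith
      have "Gs n t = 1 / x" using t x0 by (simp add: field_simps)
      moreover have "1 / x > 1 / lt" using x x0 by (simp add: frac_less2)
      ultimately have "Gs n tt < Gs n t" using ltg lt1 np unfolding lt_def by simp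
      then have "t < tt" using Gs_lt[of t tt] t(1) tt1 by simp
      then have "Af n p t < 0" using lt_neg t by simp
      then show "lam_reg_ext n j (ereal x) > ereal (1 / real n)" using t by (simp add: ext_fin)
    next
      have x: "lt > 1 / real n" by (rule lt1)
      obtain t where t: "t > 1" "lt * Gs n t = 1" "lam_reg n j lt = 1/real n \<longleftrightarrow> Af n p t = 0"
        using BS[OF x] by blast
      have l0: "lt \<noteq> 0" using lt1 np by linarith
      have "Gs n t = 1 / lt" using t(2) l0 by (simp add: field_simps)
      moreover have "Gs n tt = 1 / lt" using ltg l0 by (simp add: field_simps)
      ultimately have e: "Gs n t = Gs n tt" by simp
      have "tt = t" by (rule Gs_eq) (use t(1) tt1 e in auto)
      then have "Af n p t = 0" using tt(2) by simp
      then have "lam_reg n j lt = 1/real n" using t(3) by simp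
      then show "lam_reg_ext n j (ereal lt) = ereal (1 / real n)" by (simp add: ext_fin)
    next
      fix L :: ereal assume L: "ereal lt < L"
      show "lam_reg_ext n j L < ereal (1 / real n)"
      proof (cases L)
        case (real x)
        then have xl: "x > lt" using L by simp
        then have x: "x > 1 / real n" using lt1 by linarith
        obtain t where t: "t > 1" "x * Gs n t = 1" "lam_reg n j x < 1/real n \<longleftrightarrow> Af n p t > 0"
          using BS[OF x] by blast
        have x0: "x > 0" using x np by linarith
        have l0: "lt > 0" using lt1 np by linarith
        have "Gs n t = 1 / x" using t x0 by (simp add: field_simps)
        moreover have "1 / x < 1 / lt" using xl l0 by (simp add: frac_less2)
        ultimately have "Gs n t < Gs n tt" using g0 unfolding lt_def by simp
        then have "tt < t" using Gs_lt[of tt t] t(1) tt1 by simp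
        then have "Af n p t > 0" using gt_pos by simp
        then show ?thesis using t real by (simp add: ext_fin)
      qed (use L infcase in auto)
    qed
  qed
  show ?thesis using part1 part2 by blast
qed


end
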